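(* Let $\bm{\Pi}=\{\Pi_{\bm{x}}\}_{\bm{x}\in\{0,1\}^n}$ be a POVM on $(\mathbb{C}^2)^{\otimes n}$. Let $|\Phi_0\rangle=|+\rangle^{\otimes n}$ with $|+\rangle=(|0\rangle+|1\rangle)/\sqrt2$, $W=\frac{1}{2^n}\mathbb{1}-|\Phi_0\rangle\langle\Phi_0|$, and $\mathscr{Q}^{\theta=0}_\Phi(\bm{\Pi})=\frac{1}{2^n}\sum_{\bm{x}}2^n|\operatorname{tr}[W\Pi_{\bm{x}}]|$. Let $\mathcal{C}_{\ell_\infty}(\bm{\Pi})=\sum_{\bm{x}}\sum_{\bm{y}<\bm{z}}|\Pi_{\bm{x}}(\bm{y},\bm{z})|$. Then $$\mathcal{C}_{\ell_\infty}(\bm{\Pi})\ge 2^{n-1}\,\mathscr{Q}^{\theta=0}_\Phi(\bm{\Pi}).$$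
   Context: $\Pi(\bm{y},\bm{z})=\langle\bm{y}|\Pi|\bm{z}\rangle$ in the computational basis $\{|\bm{y}\rangle:\bm{y}\in\{0,1\}^n\}$; the sum over $\bm{y}<\bm{z}$ runs over pairs of distinct bit strings with respect to a fixed total order (each unordered pair once). *)

theory Defs
  imports "HOL-Analysis.Analysis"
begin

text \<open>Operators on (C^2)^{\<otimes> n} are represented as functions nat \<Rightarrow> nat \<Rightarrow> complex
  restricted to indices below 2^n; index i < 2^n encodes the bit string given by the
  binary expansion of i (computational basis). The total order on bit strings is the
  order on these indices.\<close>

definition psd :: "nat \<Rightarrow> (nat \<Rightarrow> nat \<Rightarrow> complex) \<Rightarrow> bool" where
  "psd N A \<longleftrightarrow> (\<forall>v :: nat \<Rightarrow> complex.
      let q = (\<Sum>i<N. \<Sum>j<N. cnj (v i) * A i j * v j) in Im q = 0 \<and> Re q \<ge> 0)"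

definition is_POVM :: "nat \<Rightarrow> (nat \<Rightarrow> nat \<Rightarrow> nat \<Rightarrow> complex) \<Rightarrow> bool" where
  "is_POVM n P \<longleftrightarrow> (\<forall>x<2^n. psd (2^n) (P x)) \<and>
     (\<forall>i<2^n. \<forall>j<2^n. (\<Sum>x<2^n. P x i j) = (if i = j then 1 else 0))"

definition Phi0 :: "nat \<Rightarrow> nat \<Rightarrow> complex" where
  "Phi0 n i = complex_of_real (1 / sqrt (2 ^ n))"

definition W_op :: "nat \<Rightarrow> nat \<Rightarrow> nat \<Rightarrow> complex" where
  "W_op n i j = (if i = j then 1 / 2 ^ n else 0) - Phi0 n i * cnj (Phi0 n j)"

definition mtrace_prod :: "nat \<Rightarrow> (nat \<Rightarrow> nat \<Rightarrow> complex) \<Rightarrow> (nat \<Rightarrow> nat \<Rightarrow> complex) \<Rightarrow> complex" where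
  "mtrace_prod N A B = (\<Sum>i<N. \<Sum>k<N. A i k * B k i)"

definition Q_theta0 :: "nat \<Rightarrow> (nat \<Rightarrow> nat \<Rightarrow> nat \<Rightarrow> complex) \<Rightarrow> real" where
  "Q_theta0 n P = (1 / 2 ^ n) * (\<Sum>x<2^n. 2 ^ n * cmod (mtrace_prod (2^n) (W_op n) (P x)))"

definition C_linf :: "nat \<Rightarrow> (nat \<Rightarrow> nat \<Rightarrow> nat \<Rightarrow> complex) \<Rightarrow> real" where
  "C_linf n P = (\<Sum>x<2^n. \<Sum>z<2^n. \<Sum>y<z. cmod (P x y z))"

end

theory Submission
  imports Defs
begin

lemma sum_two_pts:
  fixes g :: "nat \<Rightarrow> complex"
  assumes "y \<noteq> z" "y < N" "z < N"
  shows "(\<Sum>i<N. g i * (if i = y then a else if i = z then b else 0)) = g y * a + g z * b"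
proof -
  have "(\<Sum>i<N. g i * (if i = y then a else if i = z then b else 0))
      = (\<Sum>i<N. (if i = y then g y * a else 0) + (if i = z then g z * b else 0))"
    by (rule sum.cong) (use assms in auto)
  also have "\<dots> = g y * a + g z * b" using assms by (simp add: sum.distrib)
  finally show ?thesis .
qed

lemma sum_one_pt:
  fixes g :: "nat \<Rightarrow> complex"
  assumes "y < N"
  shows "(\<Sum>i<N. g i * (if i = y then a else 0)) = g y * a"
proof -
  have "(\<Sum>i<N. g i * (if i = y then a else 0)) = (\<Sum>i<N. (if i = y then g y * a else 0))"
    by (rule sum.cong) auto
  then show ?thesis using assms by simp
qed

lemma psd_quad:
  assumes "psd N A" "y \<noteq> z" "y < N" "z < N"
  shows "Im (cnj a * A y y * a + cnj a * A y z * b + (cnj b * A z y * a + cnj b * A z z * b)) = 0"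
proof -
  define v where "v = (\<lambda>i::nat. if i = y then a else if i = z then b else (0::complex))"
  have "Im (\<Sum>i<N. \<Sum>j<N. cnj (v i) * A i j * v j) = 0"
    using assms(1) unfolding psd_def Let_def by blast
  moreover have "(\<Sum>i<N. \<Sum>j<N. cnj (v i) * A i j * v j) = (\<Sum>i<N. cnj (v i) * A i y * a + cnj (v i) * A i z * b)"
    using sum_two_pts[OF assms(2-4), of "\<lambda>j. cnj (v _) * A _ j"] unfolding v_def by simp
  also have "(\<Sum>i<N. cnj (v i) * A i y * a + cnj (v i) * A i z * b)
     = (\<Sum>i<N. (A i y * a + A i z * b) * (if i = y then cnj a else if i = z then cnj b else 0))"
    unfolding v_def by (rule sum.cong) (auto simp: algebra_simps)
  also have "\<dots> = (A y y * a + A y z * b) * cnj a + (A z y * a + A z z * b) * cnj b"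
    by (rule sum_two_pts[OF assms(2-4)])
  also have "\<dots> = cnj a * A y y * a + cnj a * A y z * b + (cnj b * A z y * a + cnj b * A z z * b)"
    by (simp add: algebra_simps)
  ultimately show ?thesis by metis
qed

lemma psd_diag:
  assumes "psd N A" "y < N"
  shows "Im (A y y) = 0"
proof -
  define v where "v = (\<lambda>i::nat. if i = y then 1 else (0::complex))"
  have "Im (\<Sum>i<N. \<Sum>j<N. cnj (v i) * A i j * v j) = 0"
    using assms(1) unfolding psd_def Let_def by blast
  moreover have "(\<Sum>i<N. \<Sum>j<N. cnj (v i) * A i j * v j) = (\<Sum>i<N. cnj (v i) * A i y)"
    using sum_one_pt[OF assms(2), of "\<lambda>j. cnj (v _) * A _ j" 1] unfolding v_def by simp
  moreover have "(\<Sum>i<N. cnj (v i) * A i y) = (\<Sum>i<N. A i y * (if i = y then 1 else 0))"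
    unfolding v_def by (rule sum.cong) auto
  moreover have "\<dots> = A y y" using sum_one_pt[OF assms(2), of "\<lambda>i. A i y" 1] by simp
  ultimately show ?thesis by simp
qed

lemma psd_herm:
  assumes "psd N A" "y < N" "z < N"
  shows "A z y = cnj (A y z)"
proof (cases "y = z")
  case True
  then show ?thesis using psd_diag[OF assms(1,2)] by (simp add: complex_eq_iff)
next
  case False
  have d1: "Im (A y y) = 0" "Im (A z z) = 0" using psd_diag assms by auto
  have h1: "Im (A y y + A y z + (A z y + A z z)) = 0"
    using psd_quad[OF assms(1) False assms(2,3), of 1 1] by simp
  have h2: "Im (A y y + A y z * \<i> + (- \<i> * A z y + A z z)) = 0"
    using psd_quad[OF assms(1) False assms(2,3), of 1 "\<i>"] by simp
  show ?thesis using h1 h2 d1 by (simp add: complex_eq_iff)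
qed

lemma double_sum_split:
  fixes f :: "nat \<Rightarrow> nat \<Rightarrow> complex"
  shows "(\<Sum>i<N. \<Sum>k<N. f i k) = (\<Sum>i<N. f i i) + (\<Sum>z<N. \<Sum>y<z. f y z + f z y)"
proof (induction N)
  case 0
  then show ?case by simp
next
  case (Suc N)
  have a: "(\<Sum>i<Suc N. \<Sum>k<Suc N. f i k) = (\<Sum>i<N. \<Sum>k<N. f i k) + (\<Sum>k<N. f N k) + ((\<Sum>i<N. f i N) + f N N)"
    by (simp only: sum.lessThan_Suc sum.distrib)
  have b: "(\<Sum>z<Suc N. \<Sum>y<z. f y z + f z y) = (\<Sum>z<N. \<Sum>y<z. f y z + f z y) + (\<Sum>y<N. f y N + f N y)"
    by (simp only: sum.lessThan_Suc)
  have c: "(\<Sum>i<Suc N. f i i) = (\<Sum>i<N. f i i) + f N N"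
    by (simp only: sum.lessThan_Suc)
  show ?case unfolding a b c Suc.IH by (simp only: sum.distrib add_ac)
qed

lemma trace_W:
  fixes A :: "nat \<Rightarrow> nat \<Rightarrow> complex"
  shows "mtrace_prod (2^n) (W_op n) A = - (1 / 2^n) * (\<Sum>z<2^n. \<Sum>y<z. A y z + A z y)"
proof -
  let ?N = "2^n :: nat"
  have ph: "Phi0 n i * cnj (Phi0 n j) = 1 / 2^n" for i j
  proof -
    have "complex_of_real (1 / sqrt (2^n)) * complex_of_real (1 / sqrt (2^n)) = complex_of_real (1/2^n)"
      by (simp flip: of_real_mult)
    then show ?thesis unfolding Phi0_def by simp
  qed
  have "mtrace_prod ?N (W_op n) A = (\<Sum>i<?N. \<Sum>k<?N. (if i = k then A k i / 2^n else 0) - A k i / 2^n)"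
    unfolding mtrace_prod_def W_op_def ph by (intro sum.cong refl) (auto simp: algebra_simps)
  also have "\<dots> = (\<Sum>i<?N. A i i / 2^n) - (\<Sum>i<?N. \<Sum>k<?N. A k i / 2^n)"
    by (simp add: sum_subtractf)
  also have "(\<Sum>i<?N. \<Sum>k<?N. A k i / 2^n) = (\<Sum>i<?N. \<Sum>k<?N. A i k / 2^n)"
    by (rule sum.swap)
  also have "\<dots> = (\<Sum>i<?N. A i i / 2^n) + (\<Sum>z<?N. \<Sum>y<z. A y z / 2^n + A z y / 2^n)"
    by (rule double_sum_split)
  finally have "mtrace_prod ?N (W_op n) A = (\<Sum>i<?N. A i i / 2^n) - ((\<Sum>i<?N. A i i / 2^n) + (\<Sum>z<?N. \<Sum>y<z. A y z / 2^n + A z y / 2^n))" .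
  then have eq2: "mtrace_prod ?N (W_op n) A = (\<Sum>i<?N. A i i) / 2^n - ((\<Sum>i<?N. A i i) + (\<Sum>z<?N. \<Sum>y<z. A y z + A z y)) / 2^n"
    by (simp add: sum_divide_distrib[symmetric] add_divide_distrib[symmetric])
  have gen: "\<And>a b c::complex. a / c - (a + b) / c = - (1 / c) * b"
    by (simp add: add_divide_distrib)
  show ?thesis unfolding eq2 by (rule gen)
qed

theorem lemma4:
  fixes n :: nat and P :: "nat \<Rightarrow> nat \<Rightarrow> nat \<Rightarrow> complex"
  assumes "is_POVM n P"
  shows "C_linf n P \<ge> (2 ^ n / 2) * Q_theta0 n P"
proof -
  let ?N = "2^n :: nat"
  have psd: "psd ?N (P x)" if "x < ?N" for x using assms that unfolding is_POVM_def by auto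
  have Q: "Q_theta0 n P = (\<Sum>x<?N. cmod (mtrace_prod ?N (W_op n) (P x)))"
    unfolding Q_theta0_def by (simp add: sum_distrib_left)
  have bound: "(2^n/2) * cmod (mtrace_prod ?N (W_op n) (P x)) \<le> (\<Sum>z<?N. \<Sum>y<z. cmod (P x y z))"
    if x: "x < ?N" for x
  proof -
    define S where "S = (\<Sum>z<?N. \<Sum>y<z. P x y z + P x z y)"
    have c: "cmod (1 / (2::complex)^n) = 1 / 2^n" by (simp add: norm_divide norm_power)
    have "cmod (- (1 / (2::complex)^n) * S) = (1/2^n) * cmod S" by (simp only: norm_mult norm_minus_cancel c)
    then have e: "(2^n/2) * cmod (mtrace_prod ?N (W_op n) (P x)) = (1/2) * cmod S"
      unfolding trace_W S_def[symmetric] by simp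
    have i1: "cmod S \<le> (\<Sum>z<?N. \<Sum>y<z. cmod (P x y z + P x z y))"
      unfolding S_def by (rule order_trans[OF norm_sum sum_mono[OF norm_sum]])
    have i2: "(\<Sum>z<?N. \<Sum>y<z. cmod (P x y z + P x z y)) \<le> (\<Sum>z<?N. \<Sum>y<z. 2 * cmod (P x y z))"
    proof (intro sum_mono)
      fix z y assume zy: "z \<in> {..<?N}" "y \<in> {..<z}"
      then have "y < ?N" "z < ?N" by auto
      then have "P x z y = cnj (P x y z)" by (rule psd_herm[OF psd[OF x]])
      then show "cmod (P x y z + P x z y) \<le> 2 * cmod (P x y z)"
        using norm_triangle_ineq[of "P x y z" "P x z y"] by simp
    qed
    have i3: "(\<Sum>z<?N. \<Sum>y<z. 2 * cmod (P x y z)) = 2 * (\<Sum>z<?N. \<Sum>y<z. cmod (P x y z))"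
      by (simp add: sum_distrib_left)
    show ?thesis using e i1 i2 i3 by linarith
  qed
  have "(2^n/2) * Q_theta0 n P = (\<Sum>x<?N. (2^n/2) * cmod (mtrace_prod ?N (W_op n) (P x)))"
    unfolding Q by (simp add: sum_distrib_left)
  also have "\<dots> \<le> C_linf n P" unfolding C_linf_def by (rule sum_mono) (use bound in auto)
  finally show ?thesis .
qed

end
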